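(* Let $X$ be a locally compact Hausdorff space, $F:X\multimap X$ a discrete multivalued dynamical system, and $N$ an isolating block with respect to $F$. Let $U$ be an open neighborhood of $F(N)\cap F^{-1}(N)\cap N$ with $\operatorname{cl}U\subset\operatorname{int}N$. Put $P_1:=(F(N)\cap N)\cup\operatorname{cl}U$ and $P_2:=F(N)\cap\operatorname{bd}N$. Then $P=(P_1,P_2)$ is a weak index pair in $N$.
   Context: A multivalued map $F:X\multimap Y$ assigns to each $x\in X$ a subset $F(x)\subset Y$; $F(A)=\bigcup_{x\in A}F(x)$; $F^{-1}(B)=\{x: F(x)\cap B\neq\emptyset\}$. A discrete multivalued dynamical system (dmds) on $X$ is a usc map $F:X\times\mathbb{Z}\multimap X$ with compact values such that $F(x,0)=\{x\}$; $F(F(x,n),m)=F(x,n+m)$ whenever $nm\ge0$; and $y\in F(x,-1)\iff x\in F(y,1)$; it is identified with its generator $F=F(\cdot,1)$. A solution for $F$ through $x$ on an interval $I\ni 0$ of $\mathbb{Z}$ is $\sigma:I\to X$ with $\sigma(0)=x$, $\sigma(n+1)\in F(\sigma(n))$. For $N\subset X$, $\operatorname{Inv}N$ is the set of $x\in N$ admitting a solution $\sigma:\mathbb{Z}\to N$ through $x$. A compact $N$ is an isolating block if $N\cap F(N)\cap F^{-1}(N)\subset\operatorname{int}N$. The $F$-boundary of $A\subset X$ is $\operatorname{bd}_F A:=\operatorname{cl}A\cap\operatorname{cl}(F(A)\setminus A)$. A pair $P=(P_1,P_2)$ of compact sets $P_2\subset P_1\subset N$ is a weak index pair in $N$ if (a)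 $F(P_i)\cap N\subset P_i$ for $i=1,2$; (b) $\operatorname{bd}_F P_1\subset P_2$; (c) $\operatorname{Inv}N\subset\operatorname{int}(P_1\setminus P_2)$; (d) $P_1\setminus P_2\subset\operatorname{int}N$. *)

theory Defs
  imports "HOL-Analysis.Analysis"
begin

text \<open>Multivalued maps are modelled as set-valued functions. The ambient space X is the
  whole type 'a (a topological space).\<close>

definition mimage :: "('a \<Rightarrow> 'b set) \<Rightarrow> 'a set \<Rightarrow> 'b set" where
  "mimage F A = (\<Union>x\<in>A. F x)"

definition mpreimage :: "('a \<Rightarrow> 'b set) \<Rightarrow> 'b set \<Rightarrow> 'a set" where
  "mpreimage F B = {x. F x \<inter> B \<noteq> {}}"

definition usc_map :: "('a::topological_space \<Rightarrow> 'b::topological_space set) \<Rightarrow> bool" where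
  "usc_map F \<longleftrightarrow> (\<forall>V. open V \<longrightarrow> open {x. F x \<subseteq> V})"

definition dmds :: "('a::topological_space \<Rightarrow> int \<Rightarrow> 'a set) \<Rightarrow> bool" where
  "dmds F \<longleftrightarrow>
     usc_map (\<lambda>p. F (fst p) (snd p)) \<and>
     (\<forall>x n. compact (F x n)) \<and>
     (\<forall>x. F x 0 = {x}) \<and>
     (\<forall>x n m. n * m \<ge> 0 \<longrightarrow> mimage (\<lambda>y. F y m) (F x n) = F x (n + m)) \<and>
     (\<forall>x y. y \<in> F x (-1) \<longleftrightarrow> x \<in> F y 1)"

definition gen :: "('a \<Rightarrow> int \<Rightarrow> 'a set) \<Rightarrow> 'a \<Rightarrow> 'a set" where
  "gen F = (\<lambda>x. F x 1)"

definition Inv :: "('a \<Rightarrow> 'a set) \<Rightarrow> 'a set \<Rightarrow> 'a set" where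
  "Inv G N = {x \<in> N. \<exists>\<sigma>::int \<Rightarrow> 'a. \<sigma> 0 = x \<and> (\<forall>n. \<sigma> n \<in> N) \<and>
                          (\<forall>n. \<sigma> (n + 1) \<in> G (\<sigma> n))}"

definition isolating_block :: "('a::topological_space \<Rightarrow> 'a set) \<Rightarrow> 'a set \<Rightarrow> bool" where
  "isolating_block G N \<longleftrightarrow> compact N \<and>
     N \<inter> mimage G N \<inter> mpreimage G N \<subseteq> interior N"

definition F_boundary :: "('a::topological_space \<Rightarrow> 'a set) \<Rightarrow> 'a set \<Rightarrow> 'a set" where
  "F_boundary G A = closure A \<inter> closure (mimage G A - A)"

definition weak_index_pair ::
  "('a::topological_space \<Rightarrow> 'a set) \<Rightarrow> 'a set \<Rightarrow> 'a set \<Rightarrow> 'a set \<Rightarrow> bool" where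
  "weak_index_pair G N P1 P2 \<longleftrightarrow>
     compact P1 \<and> compact P2 \<and> P2 \<subseteq> P1 \<and> P1 \<subseteq> N \<and>
     mimage G P1 \<inter> N \<subseteq> P1 \<and> mimage G P2 \<inter> N \<subseteq> P2 \<and>
     F_boundary G P1 \<subseteq> P2 \<and>
     Inv G N \<subseteq> interior (P1 - P2) \<and>
     P1 - P2 \<subseteq> interior N"

end

theory Submission
  imports Defs
begin

lemma usc_compact_image:
  assumes usc: "\<And>V. open V \<Longrightarrow> open {x. G x \<subseteq> V}"
    and cv: "\<And>x. compact (G x)" and K: "compact K"
  shows "compact (mimage G K)"
proof (rule compactI)
  fix C assume opC: "\<forall>t\<in>C. open t" and cov: "mimage G K \<subseteq> \<Union>C"
  have "\<forall>x\<in>K. \<exists>D. D \<subseteq> C \<and> finite D \<and> G x \<subseteq> \<Union>D"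
  proof
    fix x assume "x \<in> K"
    hence "G x \<subseteq> \<Union>C" using cov unfolding mimage_def by auto
    then obtain D where "D \<subseteq> C" "finite D" "G x \<subseteq> \<Union>D"
      using compactE[OF cv[of x]] opC by metis
    thus "\<exists>D. D \<subseteq> C \<and> finite D \<and> G x \<subseteq> \<Union>D" by blast
  qed
  then obtain D where D: "\<And>x. x \<in> K \<Longrightarrow> D x \<subseteq> C \<and> finite (D x) \<and> G x \<subseteq> \<Union>(D x)"
    by metis
  define W where "W x = {y. G y \<subseteq> \<Union>(D x)}" for x
  have "\<And>x. x \<in> K \<Longrightarrow> open (W x)"
    unfolding W_def using D opC by (intro usc) blast
  moreover have "K \<subseteq> (\<Union>x\<in>K. W x)" using D unfolding W_def by auto
  ultimately obtain T where T: "T \<subseteq> K" "finite T" "K \<subseteq> (\<Union>x\<in>T. W x)"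
    using compactE_image[OF K] by metis
  show "\<exists>C'. C' \<subseteq> C \<and> finite C' \<and> mimage G K \<subseteq> \<Union>C'"
  proof (intro exI conjI)
    show "\<Union>(D ` T) \<subseteq> C" using T D by blast
    show "finite (\<Union>(D ` T))" using T D by (meson finite_UN_I subsetD)
    show "mimage G K \<subseteq> \<Union>(\<Union>(D ` T))"
      using T(3) unfolding mimage_def W_def by blast
  qed
qed

theorem theorem4:
  fixes F :: "'a::t2_space \<Rightarrow> int \<Rightarrow> 'a set"
    and N U :: "'a set"
  assumes "locally_compact_space (euclidean :: 'a topology)"
    and "dmds F"
    and "isolating_block (gen F) N"
    and "open U"
    and "mimage (gen F) N \<inter> mpreimage (gen F) N \<inter> N \<subseteq> U"
    and "closure U \<subseteq> interior N"
  shows "weak_index_pair (gen F) N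
           ((mimage (gen F) N \<inter> N) \<union> closure U)
           (mimage (gen F) N \<inter> frontier N)"
proof -
  let ?G = "gen F"
  have uscP: "\<And>V. open V \<Longrightarrow> open {p. F (fst p) (snd p) \<subseteq> V}"
  proof -
    have "usc_map (\<lambda>p. F (fst p) (snd p))" using assms(2) unfolding dmds_def by (rule conjunct1)
    thus "\<And>V. open V \<Longrightarrow> open {p. F (fst p) (snd p) \<subseteq> V}" unfolding usc_map_def by blast
  qed
  have uscG: "open {x. ?G x \<subseteq> V}" if "open V" for V
  proof -
    have "{x. ?G x \<subseteq> V} = (\<lambda>x. (x, 1::int)) -` {p. F (fst p) (snd p) \<subseteq> V}"
      unfolding gen_def by simp
    moreover have "continuous_on UNIV (\<lambda>x::'a. (x, 1::int))"
      by (intro continuous_intros)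
    ultimately show ?thesis using open_vimage[OF uscP[OF that], of "\<lambda>x::'a. (x, 1::int)"] by metis
  qed
  have cvG: "compact (?G x)" for x
  proof -
    have "\<forall>x n. compact (F x n)" using assms(2) unfolding dmds_def by (rule conjunct1[OF conjunct2])
    thus ?thesis unfolding gen_def by blast
  qed
  have Nc: "compact N" using assms(3) unfolding isolating_block_def by blast
  have blk: "N \<inter> mimage ?G N \<inter> mpreimage ?G N \<subseteq> interior N"
    using assms(3) unfolding isolating_block_def by blast
  have FNc: "compact (mimage ?G N)" by (rule usc_compact_image[OF uscG cvG Nc])
  have FNcl: "closed (mimage ?G N)" using FNc compact_imp_closed by blast
  have Ncl: "closed N" using Nc compact_imp_closed by blast
  have clU: "closure U \<subseteq> N" using assms(6) interior_subset by blast
  define P1 where "P1 = (mimage ?G N \<inter> N) \<union> closure U"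
  define P2 where "P2 = mimage ?G N \<inter> frontier N"
  have cU: "compact (closure U)"
  proof -
    have "closure U = N \<inter> closure U" using clU by blast
    thus ?thesis using compact_Int_closed[OF Nc closed_closure] by metis
  qed
  have cP1: "compact P1" unfolding P1_def
    by (intro compact_Un compact_Int_closed FNc Ncl cU)
  have P1N: "P1 \<subseteq> N" unfolding P1_def using clU by blast
  have frN: "frontier N = N - interior N" using Ncl by (simp add: frontier_def)
  have cP2: "compact P2" unfolding P2_def
    by (intro compact_Int_closed FNc frontier_closed)
  have P21: "P2 \<subseteq> P1" unfolding P1_def P2_def frN by blast
  have mono: "mimage ?G A \<subseteq> mimage ?G N" if "A \<subseteq> N" for A
    using that unfolding mimage_def by blast
  have a1: "mimage ?G P1 \<inter> N \<subseteq> P1" using mono[OF P1N] unfolding P1_def by blast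
  have a2: "mimage ?G P2 \<inter> N \<subseteq> P2"
  proof
    fix y assume "y \<in> mimage ?G P2 \<inter> N"
    then obtain x where x: "x \<in> P2" "y \<in> ?G x" "y \<in> N" unfolding mimage_def by blast
    hence "x \<in> N \<inter> mimage ?G N \<inter> mpreimage ?G N"
      unfolding P2_def frN mpreimage_def by blast
    hence "x \<in> interior N" using blk by blast
    with x(1) show "y \<in> P2" unfolding P2_def frN by blast
  qed
  have b: "F_boundary ?G P1 \<subseteq> P2"
  proof
    fix z assume z: "z \<in> F_boundary ?G P1"
    have clP1: "closure P1 = P1" using cP1 compact_imp_closed closure_closed by blast
    have sub: "mimage ?G P1 - P1 \<subseteq> mimage ?G N \<inter> (- N)"
      using mono[OF P1N] unfolding P1_def by blast
    have "closure (mimage ?G P1 - P1) \<subseteq> mimage ?G N \<inter> closure (- N)"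
      proof -
      have "closure (mimage ?G P1 - P1) \<subseteq> closure (mimage ?G N)"
        using sub by (intro closure_mono) blast
      moreover have "closure (mimage ?G P1 - P1) \<subseteq> closure (- N)"
        using sub by (intro closure_mono) blast
      ultimately show ?thesis using FNcl closure_closed by blast
    qed
    hence "z \<in> P1" "z \<in> mimage ?G N" "z \<notin> interior N"
      using z clP1 unfolding F_boundary_def by (auto simp: closure_complement)
    thus "z \<in> P2" using P1N unfolding P2_def frN by blast
  qed
  have UP: "U \<subseteq> P1 - P2"
    using assms(6) closure_subset[of U] unfolding P1_def P2_def frN by blast
  have c: "Inv ?G N \<subseteq> interior (P1 - P2)"
  proof
    fix x assume "x \<in> Inv ?G N"
    then obtain \<sigma> :: "int \<Rightarrow> 'a" where s: "x \<in> N" "\<sigma> 0 = x" "\<forall>n. \<sigma> n \<in> N" "\<forall>n. \<sigma> (n + 1) \<in> ?G (\<sigma> n)"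
      unfolding Inv_def by blast
    have "\<sigma> (-1 + 1) \<in> ?G (\<sigma> (-1))" using s(4) by blast
    hence "x \<in> mimage ?G N" using s unfolding mimage_def by force
    moreover have "\<sigma> (0 + 1) \<in> ?G x" using s by metis
    hence "x \<in> mpreimage ?G N" using s unfolding mpreimage_def by force
    ultimately have "x \<in> U" using assms(5) s(1) by blast
    thus "x \<in> interior (P1 - P2)" using UP assms(4) interior_maximal by blast
  qed
  have d: "P1 - P2 \<subseteq> interior N"
    using assms(6) unfolding P1_def P2_def frN by blast
  show ?thesis
    unfolding weak_index_pair_def P1_def[symmetric] P2_def[symmetric]
    by (intro conjI cP1 cP2 P21 P1N a1 a2 b c d)
qed

end
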